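(* Let $N$ be a finite set and $\mathcal{F} \subseteq 2^N$ a set family. If $\mathcal{F}$ satisfies (B$^\natural$-EXC$_{\rm m}$), then $\mathcal{F}$ satisfies (B$^\natural$-EXC).
   Context: Notation: $X - i = X \setminus \{i\}$, $Y + i = Y \cup \{i\}$, $X - i + j = (X\setminus\{i\})\cup\{j\}$, $Y + i - j = (Y \cup\{i\})\setminus\{j\}$. (B$^\natural$-EXC): for any $X, Y \in \mathcal{F}$ and $i \in X\setminus Y$, either (i) $X - i \in \mathcal{F}$ and $Y + i \in \mathcal{F}$, or (ii) there exists $j \in Y\setminus X$ with $X - i + j \in \mathcal{F}$ and $Y + i - j \in \mathcal{F}$. (B$^\natural$-EXC$_{\rm m}$): for any $X, Y \in \mathcal{F}$ and $I \subseteq X\setminus Y$ there exists $J \subseteq Y\setminus X$ with $(X\setminus I)\cup J \in \mathcal{F}$ and $(Y\setminus J)\cup I \in \mathcal{F}$. *)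

theory Defs
  imports Main
begin

definition bnat_exc :: "'a set set \<Rightarrow> bool" where
  "bnat_exc F \<longleftrightarrow>
     (\<forall>X\<in>F. \<forall>Y\<in>F. \<forall>i\<in>X - Y.
        (X - {i} \<in> F \<and> insert i Y \<in> F) \<or>
        (\<exists>j\<in>Y - X. insert j (X - {i}) \<in> F \<and> (insert i Y) - {j} \<in> F))"

definition bnat_exc_m :: "'a set set \<Rightarrow> bool" where
  "bnat_exc_m F \<longleftrightarrow>
     (\<forall>X\<in>F. \<forall>Y\<in>F. \<forall>I. I \<subseteq> X - Y \<longrightarrow>
        (\<exists>J. J \<subseteq> Y - X \<and> (X - I) \<union> J \<in> F \<and> (Y - J) \<union> I \<in> F))"

end

theory Submission imports Defs begin

definition sd :: "'a set \<Rightarrow> 'a set \<Rightarrow> 'a set" where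
  "sd A B = (A - B) \<union> (B - A)"

definition ex :: "'a set set \<Rightarrow> 'a set \<Rightarrow> 'a set \<Rightarrow> 'a \<Rightarrow> bool" where
  "ex F X Y i \<longleftrightarrow> (X - {i} \<in> F \<and> insert i Y \<in> F) \<or>
     (\<exists>j\<in>Y - X. insert j (X - {i}) \<in> F \<and> (insert i Y) - {j} \<in> F)"

lemma exs1:
  assumes "ex F A B a" "B - A = {y}" "A - {a} = P1" "insert a B = Q1"
    "insert y (A - {a}) = P2" "insert a B - {y} = Q2"
  shows "(P1 \<in> F \<and> Q1 \<in> F) \<or> (P2 \<in> F \<and> Q2 \<in> F)"
  using assms unfolding ex_def by auto

lemma exs0:
  assumes "ex F A B a" "B \<subseteq> A" "A - {a} = P1" "insert a B = Q1"
  shows "P1 \<in> F \<and> Q1 \<in> F"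
  using assms unfolding ex_def by auto

context
  fixes F :: "'a set set" and X Y :: "'a set" and i :: 'a
  assumes XF: "X \<in> F" and YF: "Y \<in> F" and iX: "i \<in> X" and iY: "i \<notin> Y"
  and IH: "\<And>A B a. A \<in> F \<Longrightarrow> B \<in> F \<Longrightarrow> a \<in> A \<Longrightarrow> a \<notin> B \<Longrightarrow> sd A B \<subset> sd X Y \<Longrightarrow> ex F A B a"
begin

lemma psY: "sd A B \<subseteq> Y - X \<Longrightarrow> sd A B \<subset> sd X Y"
  unfolding sd_def by (intro psubsetI) (use iX iY in blast)+


lemma IHY: "A \<in> F \<Longrightarrow> B \<in> F \<Longrightarrow> a \<in> A \<Longrightarrow> a \<notin> B \<Longrightarrow> (A - B) \<union> (B - A) \<subseteq> Y - X \<Longrightarrow> ex F A B a"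
proof -
  assume h: "A \<in> F" "B \<in> F" "a \<in> A" "a \<notin> B" "(A - B) \<union> (B - A) \<subseteq> Y - X"
  have "sd A B \<subset> sd X Y" by (rule psY) (use h(5) in \<open>simp add: sd_def\<close>)
  then show ?thesis using IH h by blast
qed

lemma IHE: "A \<in> F \<Longrightarrow> B \<in> F \<Longrightarrow> a \<in> A \<Longrightarrow> a \<notin> B \<Longrightarrow> (A - B) \<union> (B - A) \<subseteq> (X - Y) \<union> (Y - X)
   \<Longrightarrow> e \<in> (X - Y) \<union> (Y - X) \<Longrightarrow> e \<notin> (A - B) \<union> (B - A) \<Longrightarrow> ex F A B a"
proof -
  assume h: "A \<in> F" "B \<in> F" "a \<in> A" "a \<notin> B" "(A - B) \<union> (B - A) \<subseteq> (X - Y) \<union> (Y - X)"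
     "e \<in> (X - Y) \<union> (Y - X)" "e \<notin> (A - B) \<union> (B - A)"
  have "sd A B \<subset> sd X Y" unfolding sd_def by (intro psubsetI) (use h(5-7) in blast)+
  then show ?thesis using IH h by blast
qed

lemma done0: "X - {i} \<in> F \<Longrightarrow> insert i Y \<in> F \<Longrightarrow> ex F X Y i"
  unfolding ex_def by auto

lemma done1: "j \<in> Y \<Longrightarrow> j \<notin> X \<Longrightarrow> insert j (X - {i}) \<in> F \<Longrightarrow> insert i Y - {j} \<in> F \<Longrightarrow> ex F X Y i"
  unfolding ex_def by auto

lemma lemG:
  assumes jY: "j \<in> Y" and jX: "j \<notin> X" and h1: "Y - {j} \<in> F" and h2: "insert j X \<in> F"
  shows "ex F X Y i"
proof -
  have e1: "ex F X (Y - {j}) i"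
    by (rule IHE[where e=j]) (use XF h1 iX iY jY jX in auto)
  have e2: "ex F (insert j X) Y i"
    by (rule IHE[where e=j]) (use YF h2 iX iY jY jX in auto)
  have q1: "insert i (Y - {j}) = insert i Y - {j}" "Y - {j} - X = Y - X - {j}"
    "insert j X - {i} = insert j (X - {i})" "Y - insert j X = Y - X - {j}"
    using iX jX by auto
  from e1 have c1: "(X - {i} \<in> F \<and> insert i Y - {j} \<in> F) \<or>
      (\<exists>k\<in>Y - X - {j}. insert k (X - {i}) \<in> F \<and> insert i Y - {j} - {k} \<in> F)"
    unfolding ex_def q1 .
  from e2 have c2: "(insert j (X - {i}) \<in> F \<and> insert i Y \<in> F) \<or>
      (\<exists>l\<in>Y - X - {j}. insert l (insert j (X - {i})) \<in> F \<and> insert i Y - {l} \<in> F)"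
    unfolding ex_def q1 .
  show ?thesis
  proof (cases "X - {i} \<in> F \<and> insert i Y - {j} \<in> F")
    case a: True
    show ?thesis
    proof (cases "insert j (X - {i}) \<in> F \<and> insert i Y \<in> F")
      case True then show ?thesis using a done0 by blast
    next
      case False
      then obtain l where l: "l \<in> Y" "l \<notin> X" "l \<noteq> j" "insert l (insert j (X - {i})) \<in> F" "insert i Y - {l} \<in> F"
        using c2 by auto
      have "ex F (insert l (insert j (X - {i}))) (X - {i}) l"
        by (rule IHY) (use l a iX iY jY jX in auto)
      then have "insert j (X - {i}) - {} \<in> F \<and> insert l (X - {i}) \<in> F"
        by (rule exs0) (use l jX in auto)
      then show ?thesis using l done1 by auto
    qed
  next
    case na: False
    then obtain k where k: "k \<in> Y" "k \<notin> X" "k \<noteq> j" "insert k (X - {i}) \<in> F" "insert i Y - {j} - {k} \<in> F"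
      using c1 by auto
    show ?thesis
    proof (cases "insert j (X - {i}) \<in> F \<and> insert i Y \<in> F")
      case a': True
      have "ex F (insert i Y) (insert i Y - {j} - {k}) k"
        by (rule IHY) (use k a' iX iY jY jX in auto)
      then have "insert i Y - {k} \<in> F \<and> insert i Y - {j} \<in> F"
        by (rule exs0) (use k jY in auto)
      then show ?thesis using k done1 by auto
    next
      case False
      then obtain l where l: "l \<in> Y" "l \<notin> X" "l \<noteq> j" "insert l (insert j (X - {i})) \<in> F" "insert i Y - {l} \<in> F"
        using c2 by auto
      show ?thesis
      proof (cases "k = l")
        case True then show ?thesis using k l done1 by auto
      next
        case kl: False
        have "ex F (insert i Y - {l}) (insert i Y - {j} - {k}) k"
          by (rule IHY) (use k l kl iX iY jY jX in auto)
        then have y: "(insert i Y - {l} - {k} \<in> F \<and> insert i Y - {j} \<in> F) \<or>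
                   (insert i Y - {k} \<in> F \<and> insert i Y - {j} - {l} \<in> F)"
          by (rule exs1) (use k l kl iX iY jY jX in auto)
        have "ex F (insert l (insert j (X - {i}))) (insert k (X - {i})) l"
          by (rule IHY) (use k l kl iX iY jY jX in auto)
        then have x: "(insert j (X - {i}) \<in> F \<and> insert l (insert k (X - {i})) \<in> F) \<or>
                   (insert k (insert j (X - {i})) \<in> F \<and> insert l (X - {i}) \<in> F)"
          by (rule exs1) (use k l kl iX iY jY jX in auto)
        show ?thesis using x y k l jY jX done1 by blast
      qed
    qed
  qed
qed


lemma lemTwo':
  assumes aY: "\<alpha> \<in> Y" "\<alpha> \<notin> X" and bY: "\<beta> \<in> Y" "\<beta> \<notin> X" and ab: "\<alpha> \<noteq> \<beta>"
    and h1: "insert \<alpha> (X - {i}) \<in> F" and h2: "insert \<beta> X \<in> F" and h3: "insert i Y - {\<beta>} \<in> F"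
  shows "ex F X Y i"
proof -
  have e: "ex F (insert \<beta> X) Y i"
    by (rule IHE[where e=\<beta>]) (use YF h2 iX iY aY bY in auto)
  have q: "insert \<beta> X - {i} = insert \<beta> (X - {i})" "Y - insert \<beta> X = Y - X - {\<beta>}"
    using iX bY by auto
  from e have c: "(insert \<beta> (X - {i}) \<in> F \<and> insert i Y \<in> F) \<or>
      (\<exists>k\<in>Y - X - {\<beta>}. insert k (insert \<beta> (X - {i})) \<in> F \<and> insert i Y - {k} \<in> F)"
    unfolding ex_def q .
  show ?thesis
  proof (cases "insert \<beta> (X - {i}) \<in> F \<and> insert i Y \<in> F")
    case True then show ?thesis using done1 bY h3 by blast
  next
    case False
    then obtain k where k: "k \<in> Y" "k \<notin> X" "k \<noteq> \<beta>" "insert k (insert \<beta> (X - {i})) \<in> F" "insert i Y - {k} \<in> F"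
      using c by auto
    show ?thesis
    proof (cases "k = \<alpha>")
      case True then show ?thesis using k h1 done1 by blast
    next
      case ka: False
      have "ex F (insert k (insert \<beta> (X - {i}))) (insert \<alpha> (X - {i})) k"
        by (rule IHY) (use k ka ab h1 iX iY aY bY in auto)
      then have "(insert \<beta> (X - {i}) \<in> F \<and> insert k (insert \<alpha> (X - {i})) \<in> F) \<or>
          (insert \<alpha> (insert \<beta> (X - {i})) \<in> F \<and> insert k (X - {i}) \<in> F)"
        by (rule exs1) (use k ka ab iX iY aY bY in auto)
      then show ?thesis using k h3 bY done1 by blast
    qed
  qed
qed

lemma lemTwo:
  assumes uY: "u \<in> Y" "u \<notin> X" and vY: "v \<in> Y" "v \<notin> X" and uv: "u \<noteq> v"
    and Zf: "insert u (insert v (X - {i})) \<in> F" and Wf: "insert i Y - {u} - {v} \<in> F"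
    and e: "e \<in> (X - Y) \<union> (Y - X)" "e \<noteq> i" "e \<noteq> u" "e \<noteq> v"
  shows "ex F X Y i"
proof -
  have "ex F (insert u (insert v (X - {i}))) X u"
    by (rule IHE[where e=e]) (use XF Zf e iX iY uY vY uv in auto)
  then have x: "(insert v (X - {i}) \<in> F \<and> insert u X \<in> F) \<or> (insert v X \<in> F \<and> insert u (X - {i}) \<in> F)"
    by (rule exs1) (use iX iY uY vY uv in auto)
  have "ex F Y (insert i Y - {u} - {v}) u"
    by (rule IHE[where e=e]) (use YF Wf e iX iY uY vY uv in auto)
  then have y: "(Y - {u} \<in> F \<and> insert i Y - {v} \<in> F) \<or> (insert i Y - {u} \<in> F \<and> Y - {v} \<in> F)"
    by (rule exs1) (use iX iY uY vY uv in auto)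
  show ?thesis
    using x y lemTwo'[of v u] lemTwo'[of u v] done1 uY vY uv by blast
qed

lemma lemRed:
  assumes JS: "J \<subseteq> Y - X" and Zf: "(X - {i}) \<union> J \<in> F" and Wf: "insert i Y - J \<in> F"
    and e: "e \<in> (X - Y) \<union> (Y - X)" "e \<noteq> i" "e \<notin> J"
  shows "ex F X Y i \<or> (\<exists>j k. j \<in> J \<and> k \<in> J \<and> j \<noteq> k \<and>
          insert k (insert j (X - {i})) \<in> F \<and> insert i Y - {k} - {j} \<in> F)"
proof -
  have e1: "ex F X ((X - {i}) \<union> J) i"
    by (rule IHE[where e=e]) (use XF Zf e iX iY JS in auto)
  have e2: "ex F (insert i Y - J) Y i"
    by (rule IHE[where e=e]) (use YF Wf e iX iY JS in auto)
  have q: "insert i ((X - {i}) \<union> J) = X \<union> J" "(X - {i}) \<union> J - X = J"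
     "insert i Y - J - {i} = Y - J" "Y - (insert i Y - J) = J"
    using iX iY JS by auto
  from e1 have c1: "(X - {i} \<in> F \<and> X \<union> J \<in> F) \<or>
      (\<exists>j\<in>J. insert j (X - {i}) \<in> F \<and> X \<union> J - {j} \<in> F)"
    unfolding ex_def q .
  from e2 have c2: "(Y - J \<in> F \<and> insert i Y \<in> F) \<or>
      (\<exists>k\<in>J. insert k (Y - J) \<in> F \<and> insert i Y - {k} \<in> F)"
    unfolding ex_def q .
  show ?thesis
  proof (cases "X - {i} \<in> F \<and> X \<union> J \<in> F")
    case a: True
    show ?thesis
    proof (cases "Y - J \<in> F \<and> insert i Y \<in> F")
      case True then show ?thesis using a done0 by blast
    next
      case False
      then obtain k where k: "k \<in> J" "insert k (Y - J) \<in> F" "insert i Y - {k} \<in> F" using c2 by auto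
      have "ex F (X \<union> J) (X - {i}) k"
        by (rule IHE[where e=e]) (use a k e iX iY JS in auto)
      then have "X \<union> J - {k} \<in> F \<and> insert k (X - {i}) \<in> F"
        by (rule exs0) auto
      then show ?thesis using k JS done1 by blast
    qed
  next
    case na: False
    then obtain j where j: "j \<in> J" "insert j (X - {i}) \<in> F" "X \<union> J - {j} \<in> F" using c1 by auto
    show ?thesis
    proof (cases "Y - J \<in> F \<and> insert i Y \<in> F")
      case a: True
      have "ex F (insert i Y) (Y - J) j"
        by (rule IHE[where e=e]) (use a j e iX iY JS in auto)
      then have "insert i Y - {j} \<in> F \<and> insert j (Y - J) \<in> F"
        by (rule exs0) auto
      then show ?thesis using j JS done1 by blast
    next
      case False
      then obtain k where k: "k \<in> J" "insert k (Y - J) \<in> F" "insert i Y - {k} \<in> F" using c2 by auto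
      show ?thesis
      proof (cases "j = k")
        case True then show ?thesis using j k JS done1 by blast
      next
        case jk: False
        have "ex F (X \<union> J - {j}) (insert j (X - {i})) k"
          by (rule IHE[where e=e]) (use j k jk e iX iY JS in auto)
        then have x: "(X \<union> J - {j} - {k} \<in> F \<and> insert k (insert j (X - {i})) \<in> F) \<or>
            (X \<union> J - {k} \<in> F \<and> insert k (X - {i}) \<in> F)"
          by (rule exs1) (use j k jk iX iY JS in auto)
        have "ex F (insert i Y - {k}) (insert k (Y - J)) j"
          by (rule IHE[where e=e]) (use j k jk e iX iY JS in auto)
        then have y: "(insert i Y - {k} - {j} \<in> F \<and> insert j (insert k (Y - J)) \<in> F) \<or>
            (insert i Y - {j} \<in> F \<and> insert j (Y - J) \<in> F)"
          by (rule exs1) (use j k jk iX iY JS in auto)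
        show ?thesis using x y j k jk JS done1 by blast
      qed
    qed
  qed
qed

lemma step:
  assumes m: "bnat_exc_m F"
  shows "ex F X Y i"
proof -
  have "{i} \<subseteq> X - Y" using iX iY by auto
  have mm: "\<And>A B I. A \<in> F \<Longrightarrow> B \<in> F \<Longrightarrow> I \<subseteq> A - B \<Longrightarrow>
      \<exists>J. J \<subseteq> B - A \<and> (A - I) \<union> J \<in> F \<and> (B - J) \<union> I \<in> F"
    using m unfolding bnat_exc_m_def by blast
  obtain J where JS: "J \<subseteq> Y - X" and Zf0: "(X - {i}) \<union> J \<in> F" and Wf0: "(Y - J) \<union> {i} \<in> F"
    using mm[OF XF YF \<open>{i} \<subseteq> X - Y\<close>] by blast
  have "insert i Y - J = (Y - J) \<union> {i}" using JS iY by blast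
  then have Wf: "insert i Y - J \<in> F" using Wf0 by simp
  show ?thesis
  proof (cases "J = {}")
    case True
    then have "X - {i} \<in> F" "insert i Y \<in> F" using Zf0 Wf by auto
    then show ?thesis by (rule done0)
  next
    case Jne: False
    show ?thesis
    proof (cases "\<exists>j. J = {j}")
      case True
      then obtain j where "J = {j}" by blast
      then have "insert j (X - {i}) \<in> F" "insert i Y - {j} \<in> F" "j \<in> Y" "j \<notin> X"
        using Zf0 Wf JS by auto
      then show ?thesis using done1 by blast
    next
      case Jns: False
      show ?thesis
      proof (cases "\<exists>e. e \<in> (X - Y) \<union> (Y - X) \<and> e \<noteq> i \<and> e \<notin> J")
        case True
        then obtain e where e: "e \<in> (X - Y) \<union> (Y - X)" "e \<noteq> i" "e \<notin> J" by blast
        from lemRed[OF JS Zf0 Wf e] show ?thesis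
        proof
          assume "\<exists>j k. j \<in> J \<and> k \<in> J \<and> j \<noteq> k \<and>
             insert k (insert j (X - {i})) \<in> F \<and> insert i Y - {k} - {j} \<in> F"
          then obtain j k where jk: "j \<in> J" "k \<in> J" "j \<noteq> k"
             "insert k (insert j (X - {i})) \<in> F" "insert i Y - {k} - {j} \<in> F" by blast
          show ?thesis
            by (rule lemTwo[of k j e]) (use jk JS e in auto)
        qed
      next
        case False
        have nE: "\<And>e. e \<in> (X - Y) \<union> (Y - X) \<Longrightarrow> e \<noteq> i \<Longrightarrow> e \<in> J"
          using False by blast
        obtain u where u: "u \<in> J" using Jne by blast
        have "{u} \<subseteq> Y - X" using u JS by auto
        then obtain K where KS: "K \<subseteq> X - Y" and h1: "(Y - {u}) \<union> K \<in> F" and h2: "(X - K) \<union> {u} \<in> F"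
          using mm[OF YF XF \<open>{u} \<subseteq> Y - X\<close>] by blast
        have "K \<subseteq> {i}"
        proof
          fix k assume "k \<in> K"
          then have "k \<in> X - Y" using KS by blast
          moreover have "k \<notin> J" using JS \<open>k \<in> X - Y\<close> by blast
          ultimately show "k \<in> {i}" using nE by blast
        qed
        then have "K = {} \<or> K = {i}" by (simp add: subset_singleton_iff)
        then show ?thesis
        proof
          assume "K = {}"
          then have "Y - {u} \<in> F" "insert u X \<in> F" using h1 h2 by auto
          moreover have "u \<in> Y" "u \<notin> X" using u JS by auto
          ultimately show ?thesis using lemG[of u] by blast
        next
          assume "K = {i}"
          moreover have "(Y - {u}) \<union> {i} = insert i Y - {u}" using u JS iY by blast
          moreover have "(X - {i}) \<union> {u} = insert u (X - {i})" by blast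
          ultimately have "insert i Y - {u} \<in> F" "insert u (X - {i}) \<in> F" using h1 h2 by auto
          moreover have "u \<in> Y" "u \<notin> X" using u JS by auto
          ultimately show ?thesis using done1[of u] by blast
        qed
      qed
    qed
  qed
qed

end


lemma main:
  assumes N: "finite N" "F \<subseteq> Pow N" and m: "bnat_exc_m F"
  shows "X \<in> F \<Longrightarrow> Y \<in> F \<Longrightarrow> i \<in> X \<Longrightarrow> i \<notin> Y \<Longrightarrow> ex F X Y i"
proof (induction "card (sd X Y)" arbitrary: X Y i rule: less_induct)
  case less
  have "X \<subseteq> N" "Y \<subseteq> N" using less.prems N by auto
  then have "finite X" "finite Y" using N(1) finite_subset by auto
  then have fin: "finite (sd X Y)" unfolding sd_def by simp
  have IH': "\<And>A B a. A \<in> F \<Longrightarrow> B \<in> F \<Longrightarrow> a \<in> A \<Longrightarrow> a \<notin> B \<Longrightarrow> sd A B \<subset> sd X Y \<Longrightarrow> ex F A B a"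
    using less.hyps psubset_card_mono[OF fin] by blast
  show ?case by (rule step[OF less.prems IH' m])
qed

theorem proposition3:
  fixes N :: "'a set" and F :: "'a set set"
  assumes "finite N" and "F \<subseteq> Pow N" and "bnat_exc_m F"
  shows "bnat_exc F"
  unfolding bnat_exc_def using main[OF assms] unfolding ex_def by blast

end
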